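(* Let $G$ be a fair complete tripartite graph on an even number of vertices whose edges are coloured red and blue. Then there are two vertex-disjoint connected matchings of distinct colours (one red, one blue) that together cover all vertices of $G$.
   Context: A complete tripartite graph has three non-empty partition classes; it is fair if no partition class contains more than half of the vertices. The edge colouring is an arbitrary red/blue assignment. A monochromatic matching is called connected if all its edges lie in a single connected component of the subgraph formed by the edges of that colour. Matchings may be empty. *)

theory Defs
  imports Main
begin

definition tripartite_edges :: "'a set \<Rightarrow> 'a set \<Rightarrow> 'a set \<Rightarrow> 'a set set" where
  "tripartite_edges A B C =
     {{u, v} | u v. (u \<in> A \<and> v \<in> B) \<or> (u \<in> B \<and> v \<in> C) \<or> (u \<in> A \<and> v \<in> C)}"

definition fair_tripartite :: "'a set \<Rightarrow> 'a set \<Rightarrow> 'a set \<Rightarrow> bool" where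
  "fair_tripartite A B C \<longleftrightarrow>
     finite A \<and> finite B \<and> finite C \<and>
     A \<noteq> {} \<and> B \<noteq> {} \<and> C \<noteq> {} \<and>
     A \<inter> B = {} \<and> B \<inter> C = {} \<and> A \<inter> C = {} \<and>
     2 * card A \<le> card (A \<union> B \<union> C) \<and>
     2 * card B \<le> card (A \<union> B \<union> C) \<and>
     2 * card C \<le> card (A \<union> B \<union> C)"

text \<open>Edges of a given colour (colouring: edge \<Rightarrow> bool, True = red, False = blue).\<close>
definition colour_class :: "'a set set \<Rightarrow> ('a set \<Rightarrow> bool) \<Rightarrow> bool \<Rightarrow> 'a set set" where
  "colour_class E col c = {e \<in> E. col e = c}"

definition adj :: "'a set set \<Rightarrow> 'a \<Rightarrow> 'a \<Rightarrow> bool" where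
  "adj F u v \<longleftrightarrow> {u, v} \<in> F \<and> u \<noteq> v"

definition matching :: "'a set set \<Rightarrow> 'a set set \<Rightarrow> bool" where
  "matching F M \<longleftrightarrow> M \<subseteq> F \<and> (\<forall>e\<in>M. \<forall>e'\<in>M. e \<noteq> e' \<longrightarrow> e \<inter> e' = {})"

definition connected_matching :: "'a set set \<Rightarrow> 'a set set \<Rightarrow> bool" where
  "connected_matching F M \<longleftrightarrow> matching F M \<and>
     (\<forall>e\<in>M. \<forall>e'\<in>M. \<forall>u\<in>e. \<forall>v\<in>e'. (adj F)\<^sup>*\<^sup>* u v)"

end

theory Submission
  imports Defs
begin


lemma cl:
  fixes \<pi> :: "'a \<Rightarrow> nat"
  assumes third: "\<And>i j. \<exists>w\<in>V. \<pi> w \<noteq> i \<and> \<pi> w \<noteq> j"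
    and lt3: "\<And>x. x\<in>V \<Longrightarrow> \<pi> x < 3"
    and key: "\<And>x y. x\<in>V \<Longrightarrow> y\<in>V \<Longrightarrow> \<pi> x \<noteq> \<pi> y \<Longrightarrow> \<not> rc x y \<Longrightarrow> bc x y"
    and rtr: "\<And>x y z. rc x y \<Longrightarrow> rc y z \<Longrightarrow> rc x z" and rsym: "\<And>x y. rc x y \<Longrightarrow> rc y x"
    and btr: "\<And>x y z. bc x y \<Longrightarrow> bc y z \<Longrightarrow> bc x z" and bsym: "\<And>x y. bc x y \<Longrightarrow> bc y x"
    and V: "p\<in>V" "q\<in>V" "r\<in>V" "s\<in>V"
    and d: "\<pi> p \<noteq> \<pi> q" "\<pi> r \<noteq> \<pi> s" and c: "rc p q" "rc r s" "\<not> rc p r"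
  shows "bc p q"
proof -
  have nps: "\<not> rc p s" using c rtr rsym by blast
  have nqr: "\<not> rc q r" using c rtr rsym by blast
  have nqs: "\<not> rc q s" using c rtr rsym by blast
  obtain w where w: "w \<in> V" "\<pi> w \<noteq> \<pi> p" "\<pi> w \<noteq> \<pi> q" using third by blast
  show ?thesis
  proof (cases "rc w p")
    case False
    then have "\<not> rc w q" using c rtr rsym by blast
    then have "bc w q" "bc w p" using key w V False by auto
    then show ?thesis using btr bsym by blast
  next
    case wp: True
    obtain w' where w': "w' \<in> V" "\<pi> w' \<noteq> \<pi> r" "\<pi> w' \<noteq> \<pi> s" using third by blast
    show ?thesis
    proof (cases "rc w' r")
      case False
      then have "\<not> rc w' s" using c rtr rsym by blast
      then have "bc w' r" "bc w' s" using key w' V False by auto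
      then have rs: "bc r s" using btr bsym by blast
      have "bc p r"
      proof (cases "\<pi> p = \<pi> r")
        case True
        then have "bc p s" using key V nps d by auto
        then show ?thesis using rs btr bsym by blast
      qed (use key V c in auto)
      moreover have "bc q r"
      proof (cases "\<pi> q = \<pi> r")
        case True
        then have "bc q s" using key V nqs d by auto
        then show ?thesis using rs btr bsym by blast
      qed (use key V nqr in auto)
      ultimately show ?thesis using btr bsym by blast
    next
      case w'r: True
      have nww: "\<not> rc w w'" using wp w'r c rtr rsym by blast
      have nw'p: "\<not> rc w' p" using w'r c rtr rsym by blast
      have nw'q: "\<not> rc w' q" using w'r c rtr rsym by blast
      have nwr: "\<not> rc w r" using wp c rtr rsym by blast
      have nws: "\<not> rc w s" using wp c rtr rsym by blast
      show ?thesis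
      proof (cases "\<pi> w = \<pi> w'")
        case True
        then have "bc w' p" "bc w' q" using key w w' V nw'p nw'q by auto
        then show ?thesis using btr bsym by blast
      next
        case False
        then have ww: "bc w w'" using key w w' nww by auto
        have l: "\<pi> p < 3" "\<pi> q < 3" "\<pi> w < 3" "\<pi> w' < 3" "\<pi> r < 3" "\<pi> s < 3"
          using lt3 V w w' by auto
        have "\<pi> w' = \<pi> p \<or> \<pi> w' = \<pi> q" using l False w d by arith
        then show ?thesis
        proof
          assume a: "\<pi> w' = \<pi> p"
          have "(\<pi> r = \<pi> q \<and> \<pi> s = \<pi> w) \<or> (\<pi> r = \<pi> w \<and> \<pi> s = \<pi> q)"
            using l a w w' d by arith
          then show ?thesis
          proof
            assume b: "\<pi> r = \<pi> q \<and> \<pi> s = \<pi> w"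
            have "bc p r" "bc w r" "bc w' q" using key V w w' b a d c nwr nw'q by auto
            then show ?thesis using ww btr bsym by blast
          next
            assume b: "\<pi> r = \<pi> w \<and> \<pi> s = \<pi> q"
            have "bc p s" "bc w s" "bc w' q" using key V w w' b a d nps nws nw'q by auto
            then show ?thesis using ww btr bsym by blast
          qed
        next
          assume a: "\<pi> w' = \<pi> q"
          have "(\<pi> r = \<pi> p \<and> \<pi> s = \<pi> w) \<or> (\<pi> r = \<pi> w \<and> \<pi> s = \<pi> p)"
            using l a w w' d by arith
          then show ?thesis
          proof
            assume b: "\<pi> r = \<pi> p \<and> \<pi> s = \<pi> w"
            have "bc q r" "bc w r" "bc w' p" using key V w w' b a d nqr nwr nw'p by auto
            then show ?thesis using ww btr bsym by blast
          next
            assume b: "\<pi> r = \<pi> w \<and> \<pi> s = \<pi> p"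
            have "bc q s" "bc w s" "bc w' p" using key V w w' b a d nqs nws nw'p by auto
            then show ?thesis using ww btr bsym by blast
          qed
        qed
      qed
    qed
  qed
qed

lemma span:
  fixes \<pi> :: "'a \<Rightarrow> nat"
  assumes third: "\<And>i j. \<exists>w\<in>V. \<pi> w \<noteq> i \<and> \<pi> w \<noteq> j"
    and lt3: "\<And>x. x\<in>V \<Longrightarrow> \<pi> x < 3"
    and key: "\<And>x y. x\<in>V \<Longrightarrow> y\<in>V \<Longrightarrow> \<pi> x \<noteq> \<pi> y \<Longrightarrow> \<not> rc x y \<Longrightarrow> bc x y"
    and rtr: "\<And>x y z. rc x y \<Longrightarrow> rc y z \<Longrightarrow> rc x z" and rsym: "\<And>x y. rc x y \<Longrightarrow> rc y x"
    and btr: "\<And>x y z. bc x y \<Longrightarrow> bc y z \<Longrightarrow> bc x z" and bsym: "\<And>x y. bc x y \<Longrightarrow> bc y x"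
    and V: "p\<in>V" "q\<in>V" "r\<in>V" "s\<in>V"
    and d: "\<pi> p \<noteq> \<pi> q" "\<pi> r \<noteq> \<pi> s" and c: "rc p q" "rc r s" "\<not> rc p r"
    and x: "x \<in> V"
  shows "bc x p"
proof -
  have pq: "bc p q" by (rule cl[OF third lt3 key rtr rsym btr bsym V d c])
  have c2: "\<not> rc r p" using c rsym by blast
  have rs: "bc r s" by (rule cl[OF third lt3 key rtr rsym btr bsym V(3,4,1,2) d(2,1) c(2,1) c2])
  have nps: "\<not> rc p s" using c rtr rsym by blast
  have nqr: "\<not> rc q r" using c rtr rsym by blast
  have nqs: "\<not> rc q s" using c rtr rsym by blast
  have pr: "bc p r"
  proof (cases "\<pi> p = \<pi> r")
    case True
    then have "bc p s" using key V nps d by auto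
    then show ?thesis using rs btr bsym by blast
  qed (use key V c in auto)
  show ?thesis
  proof (cases "rc x p")
    case True
    then have n: "\<not> rc x r" "\<not> rc x s" using c nps rtr rsym by blast+
    show ?thesis
    proof (cases "\<pi> x = \<pi> r")
      case True
      then have "bc x s" using key V x n d by auto
      then show ?thesis using rs pr btr bsym by blast
    next
      case False
      then have "bc x r" using key V x n by auto
      then show ?thesis using pr btr bsym by blast
    qed
  next
    case False
    then have n: "\<not> rc x q" using c rtr rsym by blast
    show ?thesis
    proof (cases "\<pi> x = \<pi> p")
      case True
      then have "bc x q" using key V x n d by auto
      then show ?thesis using pq btr bsym by blast
    next
      case f: False
      then show ?thesis using key V x False by auto
    qed
  qed
qed


definition pt :: "'a set \<Rightarrow> 'a set \<Rightarrow> 'a \<Rightarrow> nat" where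
  "pt A B x = (if x \<in> A then 0 else if x \<in> B then 1 else 2)"

definition Conn :: "'a set set \<Rightarrow> bool" where
  "Conn F \<longleftrightarrow> (\<forall>e\<in>F. \<forall>e'\<in>F. \<forall>u\<in>e. \<forall>v\<in>e'. (adj F)\<^sup>*\<^sup>* u v)"

lemma adj_sym: "adj F u v \<Longrightarrow> adj F v u" by (auto simp: adj_def insert_commute)

lemma rtc_sym: assumes "(adj F)\<^sup>*\<^sup>* x y" shows "(adj F)\<^sup>*\<^sup>* y x"
  using assms by induction (auto intro: converse_rtranclp_into_rtranclp adj_sym)

lemma rtc_trans: "(adj F)\<^sup>*\<^sup>* x y \<Longrightarrow> (adj F)\<^sup>*\<^sup>* y z \<Longrightarrow> (adj F)\<^sup>*\<^sup>* x z"
  by (rule rtranclp_trans)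

lemma pt_lt: "pt A B x < 3" by (simp add: pt_def)

context
  fixes A B C :: "'a set"
  assumes disj: "A \<inter> B = {}" "B \<inter> C = {}" "A \<inter> C = {}"
begin

lemma ptA: "x \<in> A \<Longrightarrow> pt A B x = 0" by (simp add: pt_def)
lemma ptB: "x \<in> B \<Longrightarrow> pt A B x = 1" using disj(1) by (auto simp add: pt_def)
lemma ptC: "x \<in> C \<Longrightarrow> pt A B x = 2" using disj(2,3) by (auto simp add: pt_def)

lemma te_intro: "(u\<in>A\<and>v\<in>B)\<or>(u\<in>B\<and>v\<in>C)\<or>(u\<in>A\<and>v\<in>C) \<Longrightarrow> {u,v} \<in> tripartite_edges A B C"
  unfolding tripartite_edges_def by (rule CollectI, intro exI conjI, rule refl)

lemma edge_iff: "e \<in> tripartite_edges A B C \<longleftrightarrow>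
  (\<exists>x y. e = {x,y} \<and> x \<in> A\<union>B\<union>C \<and> y \<in> A\<union>B\<union>C \<and> pt A B x \<noteq> pt A B y)"
proof
  assume "e \<in> tripartite_edges A B C"
  then obtain u v where uv: "e = {u,v}" "(u \<in> A \<and> v \<in> B) \<or> (u \<in> B \<and> v \<in> C) \<or> (u \<in> A \<and> v \<in> C)"
    unfolding tripartite_edges_def by blast
  have "pt A B u \<noteq> pt A B v" using uv(2) ptA ptB ptC by auto
  then show "\<exists>x y. e = {x,y} \<and> x \<in> A\<union>B\<union>C \<and> y \<in> A\<union>B\<union>C \<and> pt A B x \<noteq> pt A B y"
    using uv by blast
next
  assume "\<exists>x y. e = {x,y} \<and> x \<in> A\<union>B\<union>C \<and> y \<in> A\<union>B\<union>C \<and> pt A B x \<noteq> pt A B y"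
  then obtain x y where e: "e = {x,y}" "x \<in> A\<union>B\<union>C" "y \<in> A\<union>B\<union>C" "pt A B x \<noteq> pt A B y" by blast
  have s: "{x,y} = {y,x}" by blast
  have "(x\<in>A\<and>y\<in>B)\<or>(x\<in>B\<and>y\<in>C)\<or>(x\<in>A\<and>y\<in>C)\<or>(y\<in>A\<and>x\<in>B)\<or>(y\<in>B\<and>x\<in>C)\<or>(y\<in>A\<and>x\<in>C)"
    using e(2,3,4) ptA ptB ptC by auto
  then show "e \<in> tripartite_edges A B C"
    unfolding e(1) using te_intro[of x y] te_intro[of y x] s by metis
qed

lemma edge_mk: "x \<in> A\<union>B\<union>C \<Longrightarrow> y \<in> A\<union>B\<union>C \<Longrightarrow> pt A B x \<noteq> pt A B y \<Longrightarrow> {x,y} \<in> tripartite_edges A B C"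
  by (subst edge_iff) blast

lemma edge_sub: assumes "e \<in> tripartite_edges A B C" shows "e \<subseteq> A\<union>B\<union>C"
proof -
  obtain x y where "e = {x,y}" "x \<in> A\<union>B\<union>C" "y \<in> A\<union>B\<union>C" using assms unfolding edge_iff by blast
  then show ?thesis by blast
qed

lemma edge_other: assumes "e \<in> tripartite_edges A B C" "u \<in> e"
  shows "\<exists>v. e = {u,v} \<and> pt A B u \<noteq> pt A B v"
proof -
  obtain x y where e: "e = {x,y}" "pt A B x \<noteq> pt A B y" using assms(1) unfolding edge_iff by blast
  then have "u = x \<or> u = y" using assms(2) by blast
  then show ?thesis
  proof
    assume "u = x" then show ?thesis using e by blast
  next
    assume "u = y" then have "e = {u,x}" "pt A B u \<noteq> pt A B x" using e by auto
    then show ?thesis by blast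
  qed
qed

lemma adj_col: "x \<in> A\<union>B\<union>C \<Longrightarrow> y \<in> A\<union>B\<union>C \<Longrightarrow> pt A B x \<noteq> pt A B y \<Longrightarrow> col {x,y} = c
   \<Longrightarrow> adj (colour_class (tripartite_edges A B C) col c) x y"
  unfolding adj_def colour_class_def using edge_mk[of x y] by auto

lemma key_col: assumes "x \<in> A\<union>B\<union>C" "y \<in> A\<union>B\<union>C" "pt A B x \<noteq> pt A B y"
   "\<not> (adj (colour_class (tripartite_edges A B C) col c))\<^sup>*\<^sup>* x y"
 shows "(adj (colour_class (tripartite_edges A B C) col (\<not>c)))\<^sup>*\<^sup>* x y"
proof (cases "col {x,y} = c")
  case True
  then have "adj (colour_class (tripartite_edges A B C) col c) x y" by (rule adj_col[OF assms(1-3)])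
  then show ?thesis using assms(4) r_into_rtranclp by metis
next
  case False
  then have "col {x,y} = (\<not>c)" by simp
  then have "adj (colour_class (tripartite_edges A B C) col (\<not>c)) x y" by (rule adj_col[OF assms(1-3)])
  then show ?thesis by (rule r_into_rtranclp)
qed

lemma conn_or:
  assumes ne: "A \<noteq> {}" "B \<noteq> {}" "C \<noteq> {}"
  shows "Conn (colour_class (tripartite_edges A B C) col c) \<or>
         Conn (colour_class (tripartite_edges A B C) col (\<not>c))"
proof -
  define V where "V = A\<union>B\<union>C"
  define rc where "rc = (adj (colour_class (tripartite_edges A B C) col c))\<^sup>*\<^sup>*"
  define bc where "bc = (adj (colour_class (tripartite_edges A B C) col (\<not>c)))\<^sup>*\<^sup>*"
  { assume "\<not> Conn (colour_class (tripartite_edges A B C) col c)"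
  then obtain e1 e2 u v where e: "e1 \<in> colour_class (tripartite_edges A B C) col c"
    "e2 \<in> colour_class (tripartite_edges A B C) col c" "u \<in> e1" "v \<in> e2" "\<not> rc u v"
    unfolding Conn_def rc_def by blast
  have E: "e1 \<in> tripartite_edges A B C" "e2 \<in> tripartite_edges A B C" "col e1 = c" "col e2 = c"
    using e by (auto simp: colour_class_def)
  obtain q where q: "e1 = {u,q}" "pt A B u \<noteq> pt A B q" using edge_other E e by blast
  obtain s where s: "e2 = {v,s}" "pt A B v \<noteq> pt A B s" using edge_other E e by blast
  have V: "u \<in> V" "q \<in> V" "v \<in> V" "s \<in> V" using edge_sub E q s V_def by auto
  have "adj (colour_class (tripartite_edges A B C) col c) u q"
    using adj_col[of u q col c] V q E unfolding V_def by auto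
  then have "rc u q" unfolding rc_def by (rule r_into_rtranclp)
  have "adj (colour_class (tripartite_edges A B C) col c) v s"
    using adj_col[of v s col c] V s E unfolding V_def by auto
  then have "rc v s" unfolding rc_def by (rule r_into_rtranclp)
  have third: "\<And>i j. \<exists>w\<in>V. pt A B w \<noteq> i \<and> pt A B w \<noteq> j"
  proof -
    fix i j :: nat
    obtain a b cc where "a \<in> A" "b \<in> B" "cc \<in> C" using ne by blast
    then have "pt A B a = 0" "pt A B b = 1" "pt A B cc = 2" "a \<in> V" "b \<in> V" "cc \<in> V"
      using ptA ptB ptC unfolding V_def by auto
    then show "\<exists>w\<in>V. pt A B w \<noteq> i \<and> pt A B w \<noteq> j"
    proof -
      assume h: "pt A B a = 0" "pt A B b = 1" "pt A B cc = 2" "a \<in> V" "b \<in> V" "cc \<in> V"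
      show ?thesis
      proof (cases "i \<noteq> 0 \<and> j \<noteq> 0")
        case True then show ?thesis using h by metis
      next
        case f1: False
        show ?thesis
        proof (cases "i \<noteq> 1 \<and> j \<noteq> 1")
          case True then show ?thesis using h by metis
        next
          case False then have "i \<noteq> 2 \<and> j \<noteq> 2" using f1 by auto
          then show ?thesis using h by metis
        qed
      qed
    qed
  qed
  have key: "\<And>x y. x\<in>V \<Longrightarrow> y\<in>V \<Longrightarrow> pt A B x \<noteq> pt A B y \<Longrightarrow> \<not> rc x y \<Longrightarrow> bc x y"
    using key_col unfolding V_def rc_def bc_def by blast
  have rtr: "\<And>x y z. rc x y \<Longrightarrow> rc y z \<Longrightarrow> rc x z" unfolding rc_def by (rule rtc_trans)
  have rsym: "\<And>x y. rc x y \<Longrightarrow> rc y x" unfolding rc_def by (rule rtc_sym)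
  have btr: "\<And>x y z. bc x y \<Longrightarrow> bc y z \<Longrightarrow> bc x z" unfolding bc_def by (rule rtc_trans)
  have bsym: "\<And>x y. bc x y \<Longrightarrow> bc y x" unfolding bc_def by (rule rtc_sym)
  have all: "\<forall>x\<in>V. bc x u"
  proof
    fix x assume x: "x \<in> V"
    show "bc x u"
      apply (rule span[of V "pt A B" rc bc u q v s x])
                        apply (rule third)
                       apply (rule pt_lt)
                      apply (rule key; assumption)
                     apply (rule rtr; assumption)
                    apply (rule rsym; assumption)
                   apply (rule btr; assumption)
                  apply (rule bsym; assumption)
      using V q(2) s(2) \<open>rc u q\<close> \<open>rc v s\<close> e(5) x by auto
  qed
  have "Conn (colour_class (tripartite_edges A B C) col (\<not>c))"
    unfolding Conn_def
  proof (intro ballI)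
    fix f f' x y assume f: "f \<in> colour_class (tripartite_edges A B C) col (\<not> c)"
      "f' \<in> colour_class (tripartite_edges A B C) col (\<not> c)" "x \<in> f" "y \<in> f'"
    then have "x \<in> V" "y \<in> V" using edge_sub V_def by (auto simp: colour_class_def)
    then have "bc x u" "bc y u" using all by blast+
    then show "(adj (colour_class (tripartite_edges A B C) col (\<not> c)))\<^sup>*\<^sup>* x y"
      unfolding bc_def by (meson rtc_sym rtc_trans)
  qed
}
  then show ?thesis by blast
qed

end


definition PM :: "'a set \<Rightarrow> 'a set set \<Rightarrow> 'a set set \<Rightarrow> bool" where
  "PM V E M \<longleftrightarrow> M \<subseteq> E \<and> (\<forall>e\<in>M. \<forall>e'\<in>M. e \<noteq> e' \<longrightarrow> e \<inter> e' = {}) \<and> \<Union>M = V"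

context
  fixes A B C :: "'a set"
  assumes disj: "A \<inter> B = {}" "B \<inter> C = {}" "A \<inter> C = {}"
begin

lemma pm_exists:
  assumes fin: "finite A" "finite B" "finite C" and ev: "even (card (A\<union>B\<union>C))"
    and fa: "2 * card A \<le> card (A\<union>B\<union>C)" "2 * card B \<le> card (A\<union>B\<union>C)" "2 * card C \<le> card (A\<union>B\<union>C)"
  shows "\<exists>M. PM (A\<union>B\<union>C) (tripartite_edges A B C) M"
proof -
  obtain la where la: "set la = A" "distinct la" using finite_distinct_list fin(1) by blast
  obtain lb where lb: "set lb = B" "distinct lb" using finite_distinct_list fin(2) by blast
  obtain lc where lc: "set lc = C" "distinct lc" using finite_distinct_list fin(3) by blast
  define xs where "xs = la @ lb @ lc"
  have dxs: "distinct xs" using la lb lc disj by (auto simp: xs_def)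
  have sxs: "set xs = A\<union>B\<union>C" using la lb lc by (auto simp: xs_def)
  define a where "a = length la"
  define b where "b = length lb"
  define c where "c = length lc"
  have cA: "card A = a" using la distinct_card a_def by metis
  have cB: "card B = b" using lb distinct_card b_def by metis
  have cC: "card C = c" using lc distinct_card c_def by metis
  have lx: "length xs = a + b + c" by (simp add: xs_def a_def b_def c_def)
  have cV: "card (A\<union>B\<union>C) = a + b + c" using sxs dxs distinct_card lx by metis
  define h where "h = (a + b + c) div 2"
  have n2: "a + b + c = 2 * h" using ev cV h_def by auto
  have bnd: "a \<le> h" "b \<le> h" "c \<le> h" using fa cA cB cC cV n2 by auto
  have ptk: "pt A B (xs ! k) = (if k < a then 0 else if k < a + b then 1 else 2)" if k: "k < a + b + c" for k
  proof (cases "k < a")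
    case True
    then have "xs ! k = la ! k" by (simp add: xs_def a_def nth_append)
    moreover have "la ! k \<in> A" using True la a_def nth_mem by metis
    ultimately show ?thesis using ptA[OF disj] True by simp
  next
    case f1: False
    show ?thesis
    proof (cases "k < a + b")
      case True
      have kb: "k - a < length lb" using True f1 b_def by simp
      have "xs ! k = lb ! (k - a)" using f1 kb by (simp add: xs_def a_def nth_append)
      moreover have "lb ! (k - a) \<in> B" using kb lb nth_mem by metis
      ultimately show ?thesis using ptB[OF disj] True f1 by simp
    next
      case False
      have kb: "\<not> k - a < length lb" using False f1 b_def by simp
      have "xs ! k = lc ! (k - a - b)" using f1 kb by (simp add: xs_def a_def b_def nth_append)
      moreover have "k - a - b < length lc" using k False c_def by simp
      then have "lc ! (k - a - b) \<in> C" using lc nth_mem by metis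
      ultimately show ?thesis using ptC[OF disj] False f1 by simp
    qed
  qed
  have dif: "pt A B (xs ! i) \<noteq> pt A B (xs ! (i + h))" if i: "i < h" for i
  proof -
    have "i < a + b + c" "i + h < a + b + c" using i n2 by auto
    then show ?thesis using ptk[of i] ptk[of "i+h"] bnd n2 i by (auto split: if_splits)
  qed
  define M where "M = (\<lambda>i. {xs ! i, xs ! (i + h)}) ` {..<h}"
  have inV: "xs ! k \<in> A\<union>B\<union>C" if "k < a + b + c" for k using that sxs lx nth_mem by metis
  have "M \<subseteq> tripartite_edges A B C"
  proof
    fix e assume "e \<in> M"
    then obtain i where i: "i < h" "e = {xs ! i, xs ! (i + h)}" unfolding M_def by blast
    show "e \<in> tripartite_edges A B C"
      unfolding i(2) by (rule edge_mk[OF disj inV inV dif]) (use i n2 in auto)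
  qed
  moreover have "\<forall>e\<in>M. \<forall>e'\<in>M. e \<noteq> e' \<longrightarrow> e \<inter> e' = {}"
  proof (intro ballI impI)
    fix e e' assume "e \<in> M" "e' \<in> M" "e \<noteq> e'"
    then obtain i j where ij: "i < h" "j < h" "e = {xs ! i, xs ! (i + h)}" "e' = {xs ! j, xs ! (j + h)}"
      unfolding M_def by blast
    then have "i \<noteq> j" using \<open>e \<noteq> e'\<close> by blast
    have eq: "xs ! p = xs ! q \<longleftrightarrow> p = q" if "p < a + b + c" "q < a + b + c" for p q
      using nth_eq_iff_index_eq[OF dxs] that lx by metis
    have "xs ! i \<noteq> xs ! j" "xs ! i \<noteq> xs ! (j + h)" "xs ! (i + h) \<noteq> xs ! j" "xs ! (i + h) \<noteq> xs ! (j + h)"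
      using eq ij \<open>i \<noteq> j\<close> n2 by auto
    then show "e \<inter> e' = {}" using ij by auto
  qed
  moreover have "\<Union>M = A\<union>B\<union>C"
  proof
    show "\<Union>M \<subseteq> A\<union>B\<union>C"
    proof
      fix x assume "x \<in> \<Union>M"
      then obtain i where i: "i < h" "x \<in> {xs ! i, xs ! (i + h)}" unfolding M_def by blast
      have "xs ! i \<in> A\<union>B\<union>C" "xs ! (i + h) \<in> A\<union>B\<union>C" using inV i n2 by auto
      then show "x \<in> A\<union>B\<union>C" using i by blast
    qed
  next
    show "A\<union>B\<union>C \<subseteq> \<Union>M"
    proof
      fix x assume "x \<in> A\<union>B\<union>C"
      then obtain k where k: "k < a + b + c" "xs ! k = x" using sxs lx in_set_conv_nth by metis
      show "x \<in> \<Union>M"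
      proof (cases "k < h")
        case True
        then show ?thesis unfolding M_def using k by blast
      next
        case False
        then have "k - h < h" "k - h + h = k" using k n2 by auto
        then show ?thesis unfolding M_def using k by (metis (no_types, lifting) UnionI image_eqI insertCI lessThan_iff)
      qed
    qed
  qed
  ultimately show ?thesis unfolding PM_def by blast
qed

end


context
  fixes A B C :: "'a set"
  assumes disj: "A \<inter> B = {}" "B \<inter> C = {}" "A \<inter> C = {}"
begin

lemma swap:
  assumes fin: "finite (A\<union>B\<union>C)" and pm: "PM (A\<union>B\<union>C) (tripartite_edges A B C) M"
    and e: "e1 \<in> M" "e2 \<in> M" "\<not> col e1" "\<not> col e2" "u \<in> e1" "v \<in> e2"
    and nb: "\<not> (adj (colour_class (tripartite_edges A B C) col False))\<^sup>*\<^sup>* u v"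
  shows "\<exists>M'. PM (A\<union>B\<union>C) (tripartite_edges A B C) M' \<and> card {e\<in>M'. \<not> col e} < card {e\<in>M. \<not> col e}"
proof -
  define E where "E = tripartite_edges A B C"
  define bc where "bc = (adj (colour_class E col False))\<^sup>*\<^sup>*"
  have ME: "M \<subseteq> E" and dis: "\<forall>e\<in>M. \<forall>e'\<in>M. e \<noteq> e' \<longrightarrow> e \<inter> e' = {}" and UM: "\<Union>M = A\<union>B\<union>C"
    using pm unfolding PM_def E_def by auto
  have E1: "e1 \<in> E" "e2 \<in> E" using ME e by auto
  obtain y1 where y1: "e1 = {u,y1}" "pt A B u \<noteq> pt A B y1" using edge_other[OF disj] E1 e unfolding E_def by blast
  obtain y2 where y2: "e2 = {v,y2}" "pt A B v \<noteq> pt A B y2" using edge_other[OF disj] E1 e unfolding E_def by blast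
  have Vs: "u \<in> A\<union>B\<union>C" "y1 \<in> A\<union>B\<union>C" "v \<in> A\<union>B\<union>C" "y2 \<in> A\<union>B\<union>C"
    using edge_sub[OF disj] E1 y1 y2 unfolding E_def by auto
  have "col {u,y1} = False" using e y1 by simp
  then have "adj (colour_class E col False) u y1" unfolding E_def by (rule adj_col[OF disj Vs(1,2) y1(2)])
  then have b1: "bc u y1" unfolding bc_def by (rule r_into_rtranclp)
  have "col {v,y2} = False" using e y2 by simp
  then have "adj (colour_class E col False) v y2" unfolding E_def by (rule adj_col[OF disj Vs(3,4) y2(2)])
  then have b2: "bc v y2" unfolding bc_def by (rule r_into_rtranclp)
  have btr: "\<And>x y z. bc x y \<Longrightarrow> bc y z \<Longrightarrow> bc x z" unfolding bc_def by (rule rtc_trans)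
  have bsym: "\<And>x y. bc x y \<Longrightarrow> bc y x" unfolding bc_def by (rule rtc_sym)
  have n0: "\<not> bc u v" using nb unfolding bc_def E_def .
  have cr: "\<not> bc u v" "\<not> bc y1 v" "\<not> bc u y2" "\<not> bc y1 y2"
    using n0 b1 b2 btr bsym by meson+
  have "e1 \<noteq> e2"
  proof
    assume "e1 = e2"
    then have "v = u \<or> v = y1" using e y1 by auto
    then show False using n0 b1 unfolding bc_def by auto
  qed
  then have d12: "e1 \<inter> e2 = {}" using dis e by blast
  have ne: "u \<noteq> v" "u \<noteq> y2" "y1 \<noteq> v" "y1 \<noteq> y2" "u \<noteq> y1" "v \<noteq> y2"
    using d12 y1 y2 by auto
  obtain a' b' where ab: "{a',b'} = {v,y2}" "a' \<noteq> b'" "pt A B u \<noteq> pt A B a'" "pt A B y1 \<noteq> pt A B b'"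
  proof (cases "pt A B u \<noteq> pt A B v \<and> pt A B y1 \<noteq> pt A B y2")
    case True
    then show ?thesis using that[of v y2] ne by blast
  next
    case False
    then have "pt A B u \<noteq> pt A B y2" "pt A B y1 \<noteq> pt A B v" using y1 y2 by auto
    then show ?thesis using that[of y2 v] ne by blast
  qed
  have abm: "a' \<in> {v,y2}" "b' \<in> {v,y2}" using ab by auto
  have Vab: "a' \<in> A\<union>B\<union>C" "b' \<in> A\<union>B\<union>C" using abm Vs by auto
  define f1 where "f1 = {u,a'}"
  define f2 where "f2 = {y1,b'}"
  have f1E: "f1 \<in> E" unfolding f1_def E_def by (rule edge_mk[OF disj Vs(1) Vab(1) ab(3)])
  have f2E: "f2 \<in> E" unfolding f2_def E_def by (rule edge_mk[OF disj Vs(2) Vab(2) ab(4)])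
  have nua: "\<not> bc u a'" using abm cr by auto
  have nyb: "\<not> bc y1 b'" using abm cr by auto
  have c1: "col f1"
  proof (rule ccontr)
    assume "\<not> col f1"
    then have "col {u,a'} = False" unfolding f1_def by simp
    then have "adj (colour_class E col False) u a'" unfolding E_def by (rule adj_col[OF disj Vs(1) Vab(1) ab(3)])
    then have "bc u a'" unfolding bc_def by (rule r_into_rtranclp)
    then show False using nua by blast
  qed
  have c2: "col f2"
  proof (rule ccontr)
    assume "\<not> col f2"
    then have "col {y1,b'} = False" unfolding f2_def by simp
    then have "adj (colour_class E col False) y1 b'" unfolding E_def by (rule adj_col[OF disj Vs(2) Vab(2) ab(4)])
    then have "bc y1 b'" unfolding bc_def by (rule r_into_rtranclp)
    then show False using nyb by blast
  qed
  define M' where "M' = (M - {e1,e2}) \<union> {f1,f2}"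
  have gdis: "g \<inter> e1 = {} \<and> g \<inter> e2 = {}" if "g \<in> M - {e1,e2}" for g
    using dis e that by blast
  have fsub: "f1 \<subseteq> e1 \<union> e2" "f2 \<subseteq> e1 \<union> e2" using abm y1 y2 unfolding f1_def f2_def by auto
  have ff: "f1 \<inter> f2 = {}"
  proof -
    have "a' \<noteq> y1" "u \<noteq> b'" using abm ne by auto
    then show ?thesis using ab(2) ne(5) unfolding f1_def f2_def by auto
  qed
  have fne: "f1 \<noteq> f2" using ff unfolding f1_def by auto
  have P1: "M' \<subseteq> E" using ME f1E f2E unfolding M'_def by auto
  have P2: "\<forall>g\<in>M'. \<forall>g'\<in>M'. g \<noteq> g' \<longrightarrow> g \<inter> g' = {}"
  proof (intro ballI impI)
    fix g g' assume g: "g \<in> M'" "g' \<in> M'" "g \<noteq> g'"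
    show "g \<inter> g' = {}"
    proof (cases "g \<in> {f1,f2}")
      case True
      show ?thesis
      proof (cases "g' \<in> {f1,f2}")
        case True
        then show ?thesis using \<open>g \<in> {f1,f2}\<close> g(3) ff by auto
      next
        case False
        then have "g' \<in> M - {e1,e2}" using g unfolding M'_def by auto
        then have "g' \<inter> (e1 \<union> e2) = {}" using gdis by blast
        then show ?thesis using True fsub by blast
      qed
    next
      case False
      then have gM: "g \<in> M - {e1,e2}" using g unfolding M'_def by auto
      then have gd: "g \<inter> (e1 \<union> e2) = {}" using gdis by blast
      show ?thesis
      proof (cases "g' \<in> {f1,f2}")
        case True
        then show ?thesis using gd fsub by blast
      next
        case False
        then have "g' \<in> M - {e1,e2}" using g unfolding M'_def by auto
        then show ?thesis using gM dis g(3) by blast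
      qed
    qed
  qed
  have P3: "\<Union>M' = A\<union>B\<union>C"
  proof -
    have "f1 \<union> f2 = e1 \<union> e2" using ab(1) y1 y2 unfolding f1_def f2_def by auto
    then have "\<Union>M' = \<Union>(M - {e1,e2}) \<union> e1 \<union> e2" unfolding M'_def by auto
    also have "\<dots> = \<Union>M" using e by auto
    finally show ?thesis using UM by simp
  qed
  have PM': "PM (A\<union>B\<union>C) (tripartite_edges A B C) M'" using P1 P2 P3 unfolding PM_def E_def by blast
  have finE: "finite E"
  proof -
    have "E \<subseteq> Pow (A\<union>B\<union>C)" using edge_sub[OF disj] unfolding E_def by blast
    then show ?thesis using fin finite_subset by blast
  qed
  have finB: "finite {e\<in>M. \<not> col e}" using ME finE finite_subset by (metis (no_types, lifting) mem_Collect_eq subsetI subset_trans)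
  have "{e\<in>M'. \<not> col e} \<subseteq> {e\<in>M. \<not> col e} - {e1}" using c1 c2 unfolding M'_def by auto
  also have "\<dots> \<subset> {e\<in>M. \<not> col e}" using e by auto
  finally have "{e\<in>M'. \<not> col e} \<subset> {e\<in>M. \<not> col e}" .
  then have "card {e\<in>M'. \<not> col e} < card {e\<in>M. \<not> col e}" using finB psubset_card_mono by blast
  then show ?thesis using PM' by blast
qed

lemma good_pm:
  assumes fin: "finite (A\<union>B\<union>C)" and ex: "PM (A\<union>B\<union>C) (tripartite_edges A B C) M0"
  shows "\<exists>M. PM (A\<union>B\<union>C) (tripartite_edges A B C) M \<and>
    (\<forall>e\<in>M. \<forall>e'\<in>M. \<not> col e \<longrightarrow> \<not> col e' \<longrightarrow>
      (\<forall>u\<in>e. \<forall>v\<in>e'. (adj (colour_class (tripartite_edges A B C) col False))\<^sup>*\<^sup>* u v))"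
proof -
  obtain M where M: "PM (A\<union>B\<union>C) (tripartite_edges A B C) M"
    and min: "\<forall>y. PM (A\<union>B\<union>C) (tripartite_edges A B C) y \<longrightarrow> card {e\<in>M. \<not> col e} \<le> card {e\<in>y. \<not> col e}"
    using ex_has_least_nat[of "PM (A\<union>B\<union>C) (tripartite_edges A B C)" M0 "\<lambda>M. card {e\<in>M. \<not> col e}"] ex
    by blast
  have "\<forall>e\<in>M. \<forall>e'\<in>M. \<not> col e \<longrightarrow> \<not> col e' \<longrightarrow>
      (\<forall>u\<in>e. \<forall>v\<in>e'. (adj (colour_class (tripartite_edges A B C) col False))\<^sup>*\<^sup>* u v)"
  proof (intro ballI impI)
    fix e e' u v assume h: "e \<in> M" "e' \<in> M" "\<not> col e" "\<not> col e'" "u \<in> e" "v \<in> e'"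
    show "(adj (colour_class (tripartite_edges A B C) col False))\<^sup>*\<^sup>* u v"
    proof (rule ccontr)
      assume "\<not> (adj (colour_class (tripartite_edges A B C) col False))\<^sup>*\<^sup>* u v"
      then obtain M' where "PM (A\<union>B\<union>C) (tripartite_edges A B C) M'"
          "card {e\<in>M'. \<not> col e} < card {e\<in>M. \<not> col e}"
        using swap[OF fin M h] by blast
      then show False using min by fastforce
    qed
  qed
  then show ?thesis using M by blast
qed

lemma main_col:
  assumes fin: "finite (A\<union>B\<union>C)" and ex: "PM (A\<union>B\<union>C) (tripartite_edges A B C) M0"
    and cn: "Conn (colour_class (tripartite_edges A B C) col True)"
  shows "\<exists>R S. connected_matching (colour_class (tripartite_edges A B C) col True) R \<and>
               connected_matching (colour_class (tripartite_edges A B C) col False) S \<and>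
               \<Union>R \<inter> \<Union>S = {} \<and> \<Union>R \<union> \<Union>S = A \<union> B \<union> C"
proof -
  obtain M where M: "PM (A\<union>B\<union>C) (tripartite_edges A B C) M"
    and good: "\<forall>e\<in>M. \<forall>e'\<in>M. \<not> col e \<longrightarrow> \<not> col e' \<longrightarrow>
      (\<forall>u\<in>e. \<forall>v\<in>e'. (adj (colour_class (tripartite_edges A B C) col False))\<^sup>*\<^sup>* u v)"
    using good_pm[OF fin ex] by blast
  have ME: "M \<subseteq> tripartite_edges A B C" and dis: "\<forall>e\<in>M. \<forall>e'\<in>M. e \<noteq> e' \<longrightarrow> e \<inter> e' = {}"
    and UM: "\<Union>M = A\<union>B\<union>C" using M unfolding PM_def by auto
  define R where "R = {e\<in>M. col e}"
  define S where "S = {e\<in>M. \<not> col e}"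
  have "connected_matching (colour_class (tripartite_edges A B C) col True) R"
    unfolding connected_matching_def matching_def
  proof (intro conjI)
    show "R \<subseteq> colour_class (tripartite_edges A B C) col True"
      using ME unfolding R_def colour_class_def by auto
    then show "\<forall>e\<in>R. \<forall>e'\<in>R. \<forall>u\<in>e. \<forall>v\<in>e'. (adj (colour_class (tripartite_edges A B C) col True))\<^sup>*\<^sup>* u v"
      using cn unfolding Conn_def by blast
    show "\<forall>e\<in>R. \<forall>e'\<in>R. e \<noteq> e' \<longrightarrow> e \<inter> e' = {}" using dis unfolding R_def by blast
  qed
  moreover have "connected_matching (colour_class (tripartite_edges A B C) col False) S"
    unfolding connected_matching_def matching_def
  proof (intro conjI)
    show "S \<subseteq> colour_class (tripartite_edges A B C) col False"
      using ME unfolding S_def colour_class_def by auto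
    show "\<forall>e\<in>S. \<forall>e'\<in>S. \<forall>u\<in>e. \<forall>v\<in>e'. (adj (colour_class (tripartite_edges A B C) col False))\<^sup>*\<^sup>* u v"
      using good unfolding S_def by blast
    show "\<forall>e\<in>S. \<forall>e'\<in>S. e \<noteq> e' \<longrightarrow> e \<inter> e' = {}" using dis unfolding S_def by blast
  qed
  moreover have "\<Union>R \<inter> \<Union>S = {}"
  proof -
    { fix x e e' assume "x \<in> e" "e \<in> R" "x \<in> e'" "e' \<in> S"
      then have "e \<noteq> e'" "e \<in> M" "e' \<in> M" unfolding R_def S_def by auto
      then have False using dis \<open>x \<in> e\<close> \<open>x \<in> e'\<close> by blast }
    then show ?thesis by blast
  qed
  moreover have "\<Union>R \<union> \<Union>S = A\<union>B\<union>C" using UM unfolding R_def S_def by blast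
  ultimately show ?thesis by blast
qed

end

lemma cc_neg: "colour_class E (\<lambda>e. \<not> col e) c = colour_class E col (\<not> c)"
  by (auto simp: colour_class_def)

theorem lemma4p1:
  fixes A B C :: "'a set" and col :: "'a set \<Rightarrow> bool"
  assumes "fair_tripartite A B C"
    and "even (card (A \<union> B \<union> C))"
  shows "\<exists>R S. connected_matching (colour_class (tripartite_edges A B C) col True) R \<and>
               connected_matching (colour_class (tripartite_edges A B C) col False) S \<and>
               \<Union>R \<inter> \<Union>S = {} \<and> \<Union>R \<union> \<Union>S = A \<union> B \<union> C"
proof -
  have f: "finite A" "finite B" "finite C" "A \<noteq> {}" "B \<noteq> {}" "C \<noteq> {}"
    "A \<inter> B = {}" "B \<inter> C = {}" "A \<inter> C = {}"
    "2 * card A \<le> card (A \<union> B \<union> C)" "2 * card B \<le> card (A \<union> B \<union> C)" "2 * card C \<le> card (A \<union> B \<union> C)"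
    using assms(1) unfolding fair_tripartite_def by auto
  have fin: "finite (A\<union>B\<union>C)" using f by auto
  obtain M0 where M0: "PM (A\<union>B\<union>C) (tripartite_edges A B C) M0"
    using pm_exists[OF f(7,8,9) f(1,2,3) assms(2) f(10,11,12)] by blast
  have "Conn (colour_class (tripartite_edges A B C) col True) \<or>
        Conn (colour_class (tripartite_edges A B C) col (\<not> True))"
    by (rule conn_or[OF f(7,8,9) f(4,5,6)])
  then show ?thesis
  proof
    assume "Conn (colour_class (tripartite_edges A B C) col True)"
    then show ?thesis by (rule main_col[OF f(7,8,9) fin M0])
  next
    assume "Conn (colour_class (tripartite_edges A B C) col (\<not> True))"
    then have "Conn (colour_class (tripartite_edges A B C) (\<lambda>e. \<not> col e) True)"
      by (simp add: cc_neg)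
    from main_col[OF f(7,8,9) fin M0 this]
    obtain R S where "connected_matching (colour_class (tripartite_edges A B C) col False) R"
      "connected_matching (colour_class (tripartite_edges A B C) col True) S"
      "\<Union>R \<inter> \<Union>S = {}" "\<Union>R \<union> \<Union>S = A \<union> B \<union> C"
      by (auto simp: cc_neg)
    then show ?thesis by blast
  qed
qed

end
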